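(* Let $\mathcal T=(T,\rho)$ be a rooted tree. The map $F_{\mathcal T}:\mathbb R^{\mathcal T}\to\mathbb R^{\mathcal T}$ is a homeomorphism and restricts to a homeomorphism from the smoothed to the rectilinear arboreal hypersurface, $F_{\mathcal T}:\mathsf H_{\mathcal T}\xrightarrow{\sim}H_{\mathcal T}$, satisfying $F_{\mathcal T}(\mathsf Q_\alpha)=Q_\alpha$ and $F_{\mathcal T}(\mathsf H_\alpha)=H_\alpha$ for all $\alpha\in V(T)$.
   Context: Rooted tree $\mathcal T=(T,\rho)$: a tree (nonempty finite connected acyclic graph) with root vertex $\rho$. Partial order on $V(T)$: $\alpha\le\beta$ iff $\alpha$ lies on the unique minimal path from $\rho$ to $\beta$; each $\alpha\ne\rho$ has a parent $\hat\alpha$ (adjacent, $\hat\alpha<\alpha$). $\mathbb R^{\mathcal T}=\mathbb R^{V(T)}$ with coordinates $x_\gamma$. Rectilinear: $Q_\alpha=\{x_\beta\ge0\text{ for all }\beta\le\alpha\}$, $H_\alpha=\partial Q_\alpha$, $H_{\mathcal T}=\bigcup_\alpha H_\alpha$. Smoothed: fix a $C^1$ function $b:\mathbb R_{>0}\to\mathbb R$ with $b\le0$, $\lim_{t\to0}b(t)=0$, $\lim_{t\to0}b'(t)=-\infty$, $b(t)=0$ for $t\gg0$, and a $C^1$ submersion $f:\mathbb R^2\to\mathbb R$ with $\{f=0\}=\{x_1=0,x_2\ge0\}\cup\{x_1>0,x_2=b(x_1)\}$, $\{f>0\}=\{x_1>0,x_2>b(x_1)\}$, $\{f<0\}=\{x_1<0\}\cup\{x_1=0,x_2<0\}\cup\{x_1>0,x_2<b(x_1)\}$.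 Set $h_\rho=x_\rho$, $h_\alpha=f(h_{\hat\alpha},x_\alpha)$ for $\alpha\ne\rho$; $\mathsf Q_\alpha=\{h_\alpha\ge0\}$, $\mathsf H_\alpha=\{h_\alpha=0\}$, $\mathsf H_{\mathcal T}=\bigcup_\alpha\mathsf H_\alpha$. Comparison map: $\varphi:\mathbb R^2\to\mathbb R$, $\varphi(x_1,x_2)=x_2$ if $x_1\le0$ and $x_2-b(x_1)$ if $x_1>0$. Set $F_\rho=x_\rho$, $F_\alpha=\varphi(h_{\hat\alpha},x_\alpha)$ for $\alpha\ne\rho$, and $F_{\mathcal T}=\{F_\alpha\}_{\alpha\in V(T)}:\mathbb R^{\mathcal T}\to\mathbb R^{\mathcal T}$. *)

theory Defs
  imports "HOL-Analysis.Analysis"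
begin

text \<open>A rooted tree on the (finite, nonempty) vertex type 'v is given by its root
  and its parent map; by convention the root is its own parent.\<close>
definition rooted_tree :: "'v::finite \<Rightarrow> ('v \<Rightarrow> 'v) \<Rightarrow> bool" where
  "rooted_tree \<rho> par \<longleftrightarrow> par \<rho> = \<rho> \<and> (\<forall>\<alpha>. \<exists>n. (par ^^ n) \<alpha> = \<rho>)"

definition tree_le :: "('v \<Rightarrow> 'v) \<Rightarrow> 'v \<Rightarrow> 'v \<Rightarrow> bool" where
  "tree_le par \<beta> \<alpha> \<longleftrightarrow> (\<exists>n. (par ^^ n) \<alpha> = \<beta>)"

definition depth :: "'v \<Rightarrow> ('v \<Rightarrow> 'v) \<Rightarrow> 'v \<Rightarrow> nat" where
  "depth \<rho> par \<alpha> = (LEAST n. (par ^^ n) \<alpha> = \<rho>)"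

definition Qrect :: "('v \<Rightarrow> 'v) \<Rightarrow> 'v \<Rightarrow> (real ^ 'v::finite) set" where
  "Qrect par \<alpha> = {x. \<forall>\<beta>. tree_le par \<beta> \<alpha> \<longrightarrow> x $ \<beta> \<ge> 0}"

definition Hrect :: "('v \<Rightarrow> 'v) \<Rightarrow> 'v \<Rightarrow> (real ^ 'v::finite) set" where
  "Hrect par \<alpha> = frontier (Qrect par \<alpha>)"

definition HrectT :: "('v \<Rightarrow> 'v) \<Rightarrow> (real ^ 'v::finite) set" where
  "HrectT par = (\<Union>\<alpha>. Hrect par \<alpha>)"

fun hiter :: "(real \<times> real \<Rightarrow> real) \<Rightarrow> ('v \<Rightarrow> 'v) \<Rightarrow> (real ^ 'v::finite) \<Rightarrow> nat \<Rightarrow> 'v \<Rightarrow> real" where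
  "hiter f par x 0 \<alpha> = x $ \<alpha>"
| "hiter f par x (Suc n) \<alpha> = f (hiter f par x n (par \<alpha>), x $ \<alpha>)"

definition hfun :: "(real \<times> real \<Rightarrow> real) \<Rightarrow> 'v \<Rightarrow> ('v \<Rightarrow> 'v) \<Rightarrow> (real ^ 'v::finite) \<Rightarrow> 'v \<Rightarrow> real" where
  "hfun f \<rho> par x \<alpha> = hiter f par x (depth \<rho> par \<alpha>) \<alpha>"

definition Qsm :: "(real \<times> real \<Rightarrow> real) \<Rightarrow> 'v \<Rightarrow> ('v \<Rightarrow> 'v) \<Rightarrow> 'v \<Rightarrow> (real ^ 'v::finite) set" where
  "Qsm f \<rho> par \<alpha> = {x. hfun f \<rho> par x \<alpha> \<ge> 0}"

definition Hsm :: "(real \<times> real \<Rightarrow> real) \<Rightarrow> 'v \<Rightarrow> ('v \<Rightarrow> 'v) \<Rightarrow> 'v \<Rightarrow> (real ^ 'v::finite) set" where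
  "Hsm f \<rho> par \<alpha> = {x. hfun f \<rho> par x \<alpha> = 0}"

definition HsmT :: "(real \<times> real \<Rightarrow> real) \<Rightarrow> 'v \<Rightarrow> ('v \<Rightarrow> 'v) \<Rightarrow> (real ^ 'v::finite) set" where
  "HsmT f \<rho> par = (\<Union>\<alpha>. Hsm f \<rho> par \<alpha>)"

definition cmp_phi :: "(real \<Rightarrow> real) \<Rightarrow> real \<times> real \<Rightarrow> real" where
  "cmp_phi b p = (if fst p \<le> 0 then snd p else snd p - b (fst p))"

definition FT :: "(real \<Rightarrow> real) \<Rightarrow> (real \<times> real \<Rightarrow> real) \<Rightarrow> 'v \<Rightarrow> ('v \<Rightarrow> 'v)
    \<Rightarrow> (real ^ 'v::finite) \<Rightarrow> real ^ 'v" where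
  "FT b f \<rho> par x = (\<chi> \<alpha>. if \<alpha> = \<rho> then x $ \<rho> else cmp_phi b (hfun f \<rho> par x (par \<alpha>), x $ \<alpha>))"

definition smoothing_fun :: "(real \<Rightarrow> real) \<Rightarrow> bool" where
  "smoothing_fun b \<longleftrightarrow>
     (\<exists>b'. (\<forall>t>0. (b has_real_derivative b' t) (at t)) \<and> continuous_on {0<..} b'
           \<and> filterlim b' at_bot (at_right 0))
   \<and> (\<forall>t>0. b t \<le> 0)
   \<and> (b \<longlongrightarrow> 0) (at_right 0)
   \<and> (\<exists>M. \<forall>t\<ge>M. b t = 0)"

definition smoothing_submersion :: "(real \<Rightarrow> real) \<Rightarrow> (real \<times> real \<Rightarrow> real) \<Rightarrow> bool" where
  "smoothing_submersion b f \<longleftrightarrow>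
     (\<exists>D1 D2. (\<forall>p. (f has_derivative (\<lambda>(u, v). D1 p * u + D2 p * v)) (at p))
             \<and> continuous_on UNIV D1 \<and> continuous_on UNIV D2
             \<and> (\<forall>p. (D1 p, D2 p) \<noteq> (0, 0)))
   \<and> {p. f p = 0} = {(x1, x2). x1 = 0 \<and> x2 \<ge> 0} \<union> {(x1, x2). x1 > 0 \<and> x2 = b x1}
   \<and> {p. f p > 0} = {(x1, x2). x1 > 0 \<and> x2 > b x1}
   \<and> {p. f p < 0} = {(x1, x2). x1 < 0} \<union> {(x1, x2). x1 = 0 \<and> x2 < 0}
                     \<union> {(x1, x2). x1 > 0 \<and> x2 < b x1}"

end

theory Submission imports Defs begin

lemma depth_root: assumes "rooted_tree \<rho> par" shows "depth \<rho> par \<rho> = 0"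
  unfolding depth_def by (rule Least_eq_0) simp

lemma depth_step: assumes T: "rooted_tree \<rho> par" and a: "\<alpha> \<noteq> \<rho>"
  shows "depth \<rho> par \<alpha> = Suc (depth \<rho> par (par \<alpha>))"
proof -
  have ex: "\<And>\<gamma>. \<exists>n. (par ^^ n) \<gamma> = \<rho>" using T unfolding rooted_tree_def by blast
  define n where "n = depth \<rho> par \<alpha>"
  have n: "(par ^^ n) \<alpha> = \<rho>" unfolding n_def depth_def by (rule LeastI_ex[OF ex])
  then obtain m where m: "n = Suc m" using a by (cases n) auto
  have m2: "(par ^^ m) (par \<alpha>) = \<rho>" using n m by (simp only: funpow_Suc_right o_apply)
  have le1: "depth \<rho> par (par \<alpha>) \<le> m" unfolding depth_def by (rule Least_le[of "\<lambda>n. (par ^^ n) (par \<alpha>) = \<rho>", OF m2])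
  define k where "k = depth \<rho> par (par \<alpha>)"
  have k: "(par ^^ k) (par \<alpha>) = \<rho>" unfolding k_def depth_def by (rule LeastI_ex[OF ex])
  hence "(par ^^ Suc k) \<alpha> = \<rho>" by (simp only: funpow_Suc_right o_apply)
  hence "n \<le> Suc k" unfolding n_def depth_def by (rule Least_le[of "\<lambda>n. (par ^^ n) \<alpha> = \<rho>"])
  thus ?thesis using le1 m unfolding n_def k_def by simp
qed

lemma tree_induct[consumes 1, case_names root step]:
  assumes T: "rooted_tree \<rho> par" and R: "P \<rho>"
    and S: "\<And>\<alpha>. \<alpha> \<noteq> \<rho> \<Longrightarrow> P (par \<alpha>) \<Longrightarrow> P \<alpha>"
  shows "P \<alpha>"
proof (induction \<alpha> rule: measure_induct_rule[where f="depth \<rho> par"])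
  case (less \<alpha>)
  show ?case
  proof (cases "\<alpha> = \<rho>")
    case True thus ?thesis using R by simp
  next
    case False
    thus ?thesis using less depth_step[OF T False] S by simp
  qed
qed

lemma tree_le_root: assumes T: "rooted_tree \<rho> par"
  shows "tree_le par \<beta> \<rho> \<longleftrightarrow> \<beta> = \<rho>"
proof -
  have p: "par \<rho> = \<rho>" using T unfolding rooted_tree_def by blast
  have "\<And>n. (par ^^ n) \<rho> = \<rho>" by (induct_tac n) (auto simp: p)
  thus ?thesis unfolding tree_le_def by (metis funpow_0)
qed

lemma tree_le_step: 
  shows "tree_le par \<beta> \<alpha> \<longleftrightarrow> \<beta> = \<alpha> \<or> tree_le par \<beta> (par \<alpha>)"
  unfolding tree_le_def
proof
  assume "\<exists>n. (par ^^ n) \<alpha> = \<beta>"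
  then obtain n where n: "(par ^^ n) \<alpha> = \<beta>" by blast
  show "\<beta> = \<alpha> \<or> (\<exists>n. (par ^^ n) (par \<alpha>) = \<beta>)"
  proof (cases n)
    case 0 thus ?thesis using n by simp
  next
    case (Suc m) thus ?thesis using n by (simp only: funpow_Suc_right o_apply) blast
  qed
next
  assume "\<beta> = \<alpha> \<or> (\<exists>n. (par ^^ n) (par \<alpha>) = \<beta>)"
  thus "\<exists>n. (par ^^ n) \<alpha> = \<beta>"
    by (metis funpow_0 funpow_Suc_right o_apply)
qed

lemma hfun_root: assumes T: "rooted_tree \<rho> par" shows "hfun f \<rho> par x \<rho> = x $ \<rho>"
  unfolding hfun_def depth_root[OF T] by simp

lemma hfun_step: assumes T: "rooted_tree \<rho> par" and a: "\<alpha> \<noteq> \<rho>"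
  shows "hfun f \<rho> par x \<alpha> = f (hfun f \<rho> par x (par \<alpha>), x $ \<alpha>)"
  unfolding hfun_def depth_step[OF T a] by simp

definition bb :: "(real \<Rightarrow> real) \<Rightarrow> real \<Rightarrow> real" where
  "bb b t = (if t \<le> 0 then 0 else b t)"

lemma cmp_phi_bb: "cmp_phi b p = snd p - bb b (fst p)"
  unfolding cmp_phi_def bb_def by simp

lemma bb_cont: assumes "smoothing_fun b" shows "continuous_on UNIV (bb b)"
proof -
  obtain b' where d: "\<And>t. t > 0 \<Longrightarrow> (b has_real_derivative b' t) (at t)"
    and lim: "(b \<longlongrightarrow> 0) (at_right 0)"
    using assms unfolding smoothing_fun_def by blast
  have "isCont (bb b) t" for t
  proof -
    consider "t < 0" | "t > 0" | "t = 0" by linarith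
    thus ?thesis
    proof cases
      case 1
      have "\<forall>\<^sub>F s in nhds t. bb b s = 0"
        using eventually_nhds_in_open[of "{..<0}" t] 1
        by (auto elim!: eventually_mono simp: bb_def)
      hence "\<forall>\<^sub>F s in nhds t. 0 = bb b s" by (auto elim: eventually_mono)
      have "isCont (\<lambda>s. 0::real) t" by simp
      thus ?thesis using isCont_cong[OF \<open>\<forall>\<^sub>F s in nhds t. 0 = bb b s\<close>] by blast
    next
      case 2
      have "\<forall>\<^sub>F s in nhds t. b s = bb b s"
        using eventually_nhds_in_open[of "{0<..}" t] 2
        by (auto elim!: eventually_mono simp: bb_def)
      moreover have "isCont b t" using d[OF 2] by (rule DERIV_isCont)
      ultimately show ?thesis using isCont_cong by blast
    next
      case 3
      have r: "((bb b) \<longlongrightarrow> 0) (at_right 0)"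
      proof -
        have "\<forall>\<^sub>F s in at_right (0::real). b s = bb b s"
          using eventually_at_right_less[of "0::real"] by (rule eventually_mono) (auto simp: bb_def)
        thus ?thesis by (intro Lim_transform_eventually[OF lim])
      qed
      have l: "((bb b) \<longlongrightarrow> 0) (at_left 0)"
      proof -
        have "\<forall>\<^sub>F s in at_left (0::real). 0 = bb b s"
          proof -
          have "\<forall>\<^sub>F s in at_left (0::real). s \<in> {-1<..<0}" by (rule eventually_at_left_real) simp
          thus ?thesis by (rule eventually_mono) (auto simp: bb_def)
        qed
        thus ?thesis by (rule Lim_transform_eventually[OF tendsto_const])
      qed
      have "((bb b) \<longlongrightarrow> 0) (at 0)" using l r by (simp add: filterlim_split_at)
      thus ?thesis using 3 by (simp add: isCont_def bb_def)
    qed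
  qed
  thus ?thesis by (simp add: continuous_at_imp_continuous_on)
qed

lemma f_cont: assumes "smoothing_submersion b f" shows "continuous_on UNIV f"
proof -
  obtain D1 D2 where d: "\<And>p. (f has_derivative (\<lambda>(u, v). D1 p * u + D2 p * v)) (at p)"
    using assms unfolding smoothing_submersion_def by blast
  show ?thesis using has_derivative_continuous[OF d] by (simp add: continuous_at_imp_continuous_on)
qed

lemma f_ge0: assumes "smoothing_submersion b f"
  shows "f p \<ge> 0 \<longleftrightarrow> fst p \<ge> 0 \<and> snd p - bb b (fst p) \<ge> 0"
proof -
  have z: "f p = 0 \<longleftrightarrow> (fst p = 0 \<and> snd p \<ge> 0) \<or> (fst p > 0 \<and> snd p = b (fst p))"
    using assms unfolding smoothing_submersion_def by (cases p) (auto simp: set_eq_iff)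
  have g: "f p > 0 \<longleftrightarrow> (fst p > 0 \<and> snd p > b (fst p))"
    using assms unfolding smoothing_submersion_def by (cases p) (auto simp: set_eq_iff)
  show ?thesis using z g unfolding bb_def by auto
qed

lemma f_eq0: assumes "smoothing_submersion b f"
  shows "f p = 0 \<longleftrightarrow> fst p \<ge> 0 \<and> snd p - bb b (fst p) \<ge> 0 \<and> (fst p = 0 \<or> snd p - bb b (fst p) = 0)"
proof -
  have z: "f p = 0 \<longleftrightarrow> (fst p = 0 \<and> snd p \<ge> 0) \<or> (fst p > 0 \<and> snd p = b (fst p))"
    using assms unfolding smoothing_submersion_def by (cases p) (auto simp: set_eq_iff)
  show ?thesis using z unfolding bb_def by auto
qed

lemma hfun_cont: assumes T: "rooted_tree \<rho> par" and fc: "continuous_on UNIV f"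
  shows "continuous_on UNIV (\<lambda>x. hfun f \<rho> par x \<alpha>)"
  using T
proof (induction \<alpha> rule: tree_induct)
  case root
  show ?case unfolding hfun_root[OF T] by (intro continuous_intros)
next
  case (step \<alpha>)
  have "continuous_on UNIV (\<lambda>x. f (hfun f \<rho> par x (par \<alpha>), x $ \<alpha>))"
    by (rule continuous_on_compose2[OF fc]) (auto intro!: continuous_intros step)
  thus ?case unfolding hfun_step[OF T step(1)] .
qed

lemma FT_comp: "FT b f \<rho> par x $ \<alpha> = (if \<alpha> = \<rho> then x $ \<rho> else x $ \<alpha> - bb b (hfun f \<rho> par x (par \<alpha>)))"
  unfolding FT_def cmp_phi_bb by simp

lemma FT_cont: assumes T: "rooted_tree \<rho> par" and fc: "continuous_on UNIV f"
  and bc: "continuous_on UNIV (bb b)"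
  shows "continuous_on UNIV (FT b f \<rho> par)"
proof -
  have "continuous_on UNIV (\<lambda>x. FT b f \<rho> par x $ i)" for i
  proof (cases "i = \<rho>")
    case True thus ?thesis unfolding FT_comp by (simp add: continuous_intros)
  next
    case False
    have "continuous_on UNIV (\<lambda>x. x $ i - bb b (hfun f \<rho> par x (par i)))"
      by (intro continuous_intros continuous_on_compose2[OF bc] hfun_cont[OF T fc]) auto
    thus ?thesis unfolding FT_comp using False by simp
  qed
  hence "continuous_on UNIV (\<lambda>x. \<chi> i. FT b f \<rho> par x $ i)" by (rule continuous_on_vec_lambda)
  thus ?thesis by (simp add: vec_lambda_eta)
qed

fun gh :: "(real \<Rightarrow> real) \<Rightarrow> (real \<times> real \<Rightarrow> real) \<Rightarrow> ('v \<Rightarrow> 'v) \<Rightarrow> real ^ 'v::finite \<Rightarrow> nat \<Rightarrow> 'v \<Rightarrow> real \<times> real" where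
  "gh b f par y 0 \<alpha> = (y $ \<alpha>, y $ \<alpha>)"
| "gh b f par y (Suc n) \<alpha> = (y $ \<alpha> + bb b (snd (gh b f par y n (par \<alpha>))),
      f (snd (gh b f par y n (par \<alpha>)), y $ \<alpha> + bb b (snd (gh b f par y n (par \<alpha>)))))"

definition GT where "GT b f \<rho> par y = (\<chi> \<alpha>. fst (gh b f par y (depth \<rho> par \<alpha>) \<alpha>))"

lemma gh_cont: assumes T: "rooted_tree \<rho> par" and fc: "continuous_on UNIV f"
  and bc: "continuous_on UNIV (bb b)"
  shows "continuous_on UNIV (\<lambda>y. gh b f par y (depth \<rho> par \<alpha>) \<alpha>)"
  using T
proof (induction \<alpha> rule: tree_induct)
  case root
  show ?case unfolding depth_root[OF T] by (simp add: continuous_intros)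
next
  case (step \<alpha>)
  let ?h = "\<lambda>y. snd (gh b f par y (depth \<rho> par (par \<alpha>)) (par \<alpha>))"
  have c1: "continuous_on UNIV ?h" by (intro continuous_intros step)
  have c2: "continuous_on UNIV (\<lambda>y. y $ \<alpha> + bb b (?h y))"
    by (intro continuous_intros continuous_on_compose2[OF bc c1]) auto
  have c3: "continuous_on UNIV (\<lambda>y. f (?h y, y $ \<alpha> + bb b (?h y)))"
    by (rule continuous_on_compose2[OF fc]) (auto intro!: continuous_intros c1 c2)
  show ?case unfolding depth_step[OF T step(1)] gh.simps
    by (intro continuous_on_Pair c2 c3)
qed

lemma GT_cont: assumes T: "rooted_tree \<rho> par" and fc: "continuous_on UNIV f"
  and bc: "continuous_on UNIV (bb b)"
  shows "continuous_on UNIV (GT b f \<rho> par)"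
  unfolding GT_def by (intro continuous_intros gh_cont[OF T fc bc])

lemma gh_G: assumes T: "rooted_tree \<rho> par"
  shows "snd (gh b f par y (depth \<rho> par \<alpha>) \<alpha>) = hfun f \<rho> par (GT b f \<rho> par y) \<alpha>"
  using T
proof (induction \<alpha> rule: tree_induct)
  case root
  show ?case unfolding depth_root[OF T] hfun_root[OF T] GT_def by (simp add: depth_root[OF T])
next
  case (step \<alpha>)
  show ?case unfolding hfun_step[OF T step(1)] step(2)[symmetric]
    by (simp add: GT_def depth_step[OF T step(1)])
qed

lemma FG: assumes T: "rooted_tree \<rho> par"
  shows "FT b f \<rho> par (GT b f \<rho> par y) = y"
proof (rule vec_eq_iff[THEN iffD2], rule allI)
  fix \<alpha>
  show "FT b f \<rho> par (GT b f \<rho> par y) $ \<alpha> = y $ \<alpha>"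
  proof (cases "\<alpha> = \<rho>")
    case True thus ?thesis unfolding FT_comp by (simp add: GT_def depth_root[OF T])
  next
    case False
    thus ?thesis unfolding FT_comp gh_G[OF T, symmetric]
      by (simp add: GT_def depth_step[OF T False])
  qed
qed

lemma GF_aux: assumes T: "rooted_tree \<rho> par"
  shows "gh b f par (FT b f \<rho> par x) (depth \<rho> par \<alpha>) \<alpha> = (x $ \<alpha>, hfun f \<rho> par x \<alpha>)"
  using T
proof (induction \<alpha> rule: tree_induct)
  case root
  show ?case unfolding depth_root[OF T] hfun_root[OF T] by (simp add: FT_comp)
next
  case (step \<alpha>)
  show ?case unfolding depth_step[OF T step(1)] gh.simps step(2) hfun_step[OF T step(1)]
    using step(1) by (simp add: FT_comp)
qed

lemma GF: assumes T: "rooted_tree \<rho> par"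
  shows "GT b f \<rho> par (FT b f \<rho> par x) = x"
  unfolding GT_def GF_aux[OF T] by (simp add: vec_eq_iff)

lemma h_ge0: assumes T: "rooted_tree \<rho> par" and S: "smoothing_submersion b f"
  shows "(hfun f \<rho> par x \<alpha> \<ge> 0 \<longleftrightarrow> (\<forall>\<beta>. tree_le par \<beta> \<alpha> \<longrightarrow> FT b f \<rho> par x $ \<beta> \<ge> 0))
       \<and> (hfun f \<rho> par x \<alpha> = 0 \<longleftrightarrow> (\<forall>\<beta>. tree_le par \<beta> \<alpha> \<longrightarrow> FT b f \<rho> par x $ \<beta> \<ge> 0)
              \<and> (\<exists>\<beta>. tree_le par \<beta> \<alpha> \<and> FT b f \<rho> par x $ \<beta> = 0))"
  using T
proof (induction \<alpha> rule: tree_induct)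
  case root
  show ?case unfolding tree_le_root[OF T] hfun_root[OF T] by (auto simp: FT_comp)
next
  case (step \<alpha>)
  have e: "FT b f \<rho> par x $ \<alpha> = x $ \<alpha> - bb b (hfun f \<rho> par x (par \<alpha>))"
    using step(1) by (simp add: FT_comp)
  show ?case
    unfolding hfun_step[OF T step(1)] f_ge0[OF S] f_eq0[OF S] fst_conv snd_conv e[symmetric]
      tree_le_step[of par _ \<alpha>]
    using step(2) by auto
qed

lemma Hrect_char:
  "Hrect par \<alpha> = {y::real^'v::finite. (\<forall>\<beta>. tree_le par \<beta> \<alpha> \<longrightarrow> y $ \<beta> \<ge> 0)
        \<and> (\<exists>\<beta>. tree_le par \<beta> \<alpha> \<and> y $ \<beta> = 0)}"
proof -
  define A where "A = {\<beta>. tree_le par \<beta> \<alpha>}"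
  have Qe: "Qrect par \<alpha> = (\<Inter>\<beta>\<in>A. {x::real^'v. x $ \<beta> \<ge> 0})"
    unfolding Qrect_def A_def by auto
  have cl: "closed (Qrect par \<alpha>)" unfolding Qe
    by (intro closed_INT ballI closed_halfspace_component_ge_cart)
  define I where "I = (\<Inter>\<beta>\<in>A. {x::real^'v. x $ \<beta> > 0})"
  have opI: "open I" unfolding I_def
    by (intro open_INT ballI open_halfspace_component_gt_cart) simp
  have "I \<subseteq> interior (Qrect par \<alpha>)"
    by (rule interior_maximal[OF _ opI]) (auto simp: I_def Qe less_imp_le)
  moreover have "interior (Qrect par \<alpha>) \<subseteq> I"
  proof
    fix y assume y: "y \<in> interior (Qrect par \<alpha>)"
    hence yQ: "y \<in> Qrect par \<alpha>" using interior_subset by blast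
    obtain e where e: "e > 0" "ball y e \<subseteq> Qrect par \<alpha>" using y mem_interior by blast
    show "y \<in> I" unfolding I_def
    proof (rule INT_I)
      fix \<beta> assume b: "\<beta> \<in> A"
      show "y \<in> {x. x $ \<beta> > 0}"
      proof (rule ccontr)
        assume "y \<notin> {x. x $ \<beta> > 0}"
        hence y0: "y $ \<beta> \<le> 0" by simp
        define z where "z = y - (e/2) *\<^sub>R axis \<beta> (1::real)"
        have "dist y z = e/2" unfolding z_def dist_norm using e(1) by simp
        hence "z \<in> ball y e" using e(1) by simp
        hence "z \<in> Qrect par \<alpha>" using e(2) by blast
        hence "z $ \<beta> \<ge> 0" using b unfolding Qe by blast
        moreover have "z $ \<beta> = y $ \<beta> - e/2" unfolding z_def by simp
        ultimately show False using y0 e(1) by linarith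
      qed
    qed
  qed
  ultimately have int: "interior (Qrect par \<alpha>) = I" by blast
  have "Hrect par \<alpha> = Qrect par \<alpha> - I"
    unfolding Hrect_def frontier_def closure_closed[OF cl] int ..
  also have "\<dots> = {y. (\<forall>\<beta>. tree_le par \<beta> \<alpha> \<longrightarrow> y $ \<beta> \<ge> 0)
        \<and> (\<exists>\<beta>. tree_le par \<beta> \<alpha> \<and> y $ \<beta> = 0)}"
    unfolding Qe I_def A_def by (auto simp: not_less) (meson antisym not_less, fastforce)
  finally show ?thesis .
qed

lemma image_preimage_surj: assumes "\<And>y. F (G y) = y" shows "F ` {x. F x \<in> S} = S"
proof
  show "S \<subseteq> F ` {x. F x \<in> S}"
  proof
    fix y assume "y \<in> S"
    thus "y \<in> F ` {x. F x \<in> S}" using assms by (metis (mono_tags) image_eqI mem_Collect_eq)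
  qed
qed auto

theorem proposition3p13:
  fixes \<rho> :: "'v::finite" and par :: "'v \<Rightarrow> 'v"
    and b :: "real \<Rightarrow> real" and f :: "real \<times> real \<Rightarrow> real"
  assumes "rooted_tree \<rho> par"
    and "smoothing_fun b"
    and "smoothing_submersion b f"
  shows "\<exists>G. homeomorphism UNIV UNIV (FT b f \<rho> par) G
           \<and> homeomorphism (HsmT f \<rho> par) (HrectT par) (FT b f \<rho> par) G
           \<and> (\<forall>\<alpha>. FT b f \<rho> par ` Qsm f \<rho> par \<alpha> = Qrect par \<alpha>
                 \<and> FT b f \<rho> par ` Hsm f \<rho> par \<alpha> = Hrect par \<alpha>)"
proof (intro exI conjI allI)
  note T = assms(1)
  have fc: "continuous_on UNIV f" by (rule f_cont[OF assms(3)])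
  have bc: "continuous_on UNIV (bb b)" by (rule bb_cont[OF assms(2)])
  let ?F = "FT b f \<rho> par" and ?G = "GT b f \<rho> par"
  have FG': "\<And>y. ?F (?G y) = y" by (rule FG[OF T])
  have GF': "\<And>x. ?G (?F x) = x" by (rule GF[OF T])
  show H: "homeomorphism UNIV UNIV ?F ?G"
    unfolding homeomorphism_def
    using FG' GF' FT_cont[OF T fc bc] GT_cont[OF T fc bc]
    by (auto intro: surjI[of ?G ?F] surjI[of ?F ?G] simp: surj_def) (metis rangeI)+
  have Q: "?F ` Qsm f \<rho> par \<alpha> = Qrect par \<alpha>" for \<alpha>
  proof -
    have "Qsm f \<rho> par \<alpha> = {x. ?F x \<in> Qrect par \<alpha>}"
      unfolding Qsm_def Qrect_def using h_ge0[OF T assms(3)] by auto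
    thus ?thesis using image_preimage_surj[of ?F ?G, OF FG'] by simp
  qed
  have Hs: "?F ` Hsm f \<rho> par \<alpha> = Hrect par \<alpha>" for \<alpha>
  proof -
    have "Hsm f \<rho> par \<alpha> = {x. ?F x \<in> Hrect par \<alpha>}"
      unfolding Hsm_def Hrect_char using h_ge0[OF T assms(3)] by auto
    thus ?thesis using image_preimage_surj[of ?F ?G, OF FG'] by simp
  qed
  show "?F ` Qsm f \<rho> par \<alpha> = Qrect par \<alpha>" for \<alpha> by (rule Q)
  show "?F ` Hsm f \<rho> par \<alpha> = Hrect par \<alpha>" for \<alpha> by (rule Hs)
  have "?F ` HsmT f \<rho> par = HrectT par"
    unfolding HsmT_def HrectT_def image_UN using Hs by simp
  thus "homeomorphism (HsmT f \<rho> par) (HrectT par) ?F ?G"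
    by (intro homeomorphism_of_subsets[OF H]) auto
qed

end
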